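(* For every finite item set $M$ and every additive valuation $v$ on $M$ with nonnegative item values, $\mathrm{RMMS}(M,v,2)=\mathrm{MMS}(M,v,2)$.
   Context: A valuation $v:2^M\to\mathbb{R}_{\ge0}$ is additive if $v(S)=\sum_{e\in S}v(\{e\})$ for all $S\subseteq M$. $\mathrm{MMS}(M,v,n)$ is the maximum, over all partitions $P_1,\dots,P_n$ of $M$ into $n$ (possibly empty) parts, of $\min_j v(P_j)$. Residual maximin share: $\mathrm{RMMS}(M,v,n)$ is the largest real $t$ with the following property: for every $0\le k<n$ and every $k$ pairwise disjoint bundles $B_1,\dots,B_k\subseteq M$ with $v(B_j)<t$ for all $j$, the set $M\setminus(B_1\cup\dots\cup B_k)$ can be partitioned into $n-k$ bundles each of value (under $v$) at least $t$. *)

theory Defs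
  imports Complex_Main "HOL-Library.Disjoint_Sets"
begin

definition is_partition :: "'a set \<Rightarrow> nat \<Rightarrow> (nat \<Rightarrow> 'a set) \<Rightarrow> bool" where
  "is_partition M n P \<longleftrightarrow>
     disjoint_family_on P {..<n} \<and> (\<Union>j<n. P j) = M"

definition additive_valuation :: "'a set \<Rightarrow> ('a set \<Rightarrow> real) \<Rightarrow> bool" where
  "additive_valuation M v \<longleftrightarrow>
     (\<forall>e\<in>M. v {e} \<ge> 0) \<and> (\<forall>S. S \<subseteq> M \<longrightarrow> v S = (\<Sum>e\<in>S. v {e}))"

definition MMS :: "'a set \<Rightarrow> ('a set \<Rightarrow> real) \<Rightarrow> nat \<Rightarrow> real" where
  "MMS M v n = (GREATEST t. \<exists>P. is_partition M n P \<and> t = Min {v (P j) | j. j < n})"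

definition rmms_prop :: "'a set \<Rightarrow> ('a set \<Rightarrow> real) \<Rightarrow> nat \<Rightarrow> real \<Rightarrow> bool" where
  "rmms_prop M v n t \<longleftrightarrow>
     (\<forall>k<n. \<forall>B :: nat \<Rightarrow> 'a set.
        (disjoint_family_on B {..<k} \<and> (\<forall>j<k. B j \<subseteq> M \<and> v (B j) < t)) \<longrightarrow>
        (\<exists>P. is_partition (M - (\<Union>j<k. B j)) (n - k) P \<and> (\<forall>j<n - k. v (P j) \<ge> t)))"

definition RMMS :: "'a set \<Rightarrow> ('a set \<Rightarrow> real) \<Rightarrow> nat \<Rightarrow> real" where
  "RMMS M v n = (GREATEST t. rmms_prop M v n t)"

end

theory Submission
  imports Defs
begin

lemma two: "{..<(2::nat)} = {0,1}" by auto

lemma lt2: "(j::nat) < 2 \<longleftrightarrow> j = 0 \<or> j = 1" by auto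

lemma part2:
  assumes "is_partition M 2 P"
  shows "P 0 \<union> P 1 = M" "P 0 \<inter> P 1 = {}"
proof -
  have e: "{..<(2::nat)} = {0,1}" by auto
  show "P 0 \<union> P 1 = M" using assms unfolding is_partition_def e by simp
  have "disjoint_family_on P {..<2}" using assms unfolding is_partition_def by simp
  then show "P 0 \<inter> P 1 = {}" by (rule disjoint_family_onD) auto
qed

lemma min2: "Min {v (P j) | j. j < (2::nat)} = min (v (P 0)) (v (P 1))"
proof -
  have "{v (P j) | j. j < (2::nat)} = {v (P 0), v (P 1)}"
    unfolding lt2 by blast
  then show ?thesis by simp
qed
lemma addsplit:
  assumes "finite M" "additive_valuation M v" "A \<union> B = M" "A \<inter> B = {}"
  shows "v M = v A + v B"
proof -
  have add: "\<And>S. S \<subseteq> M \<Longrightarrow> v S = (\<Sum>e\<in>S. v {e})"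
    using assms(2) unfolding additive_valuation_def by blast
  have fA: "finite A" using assms(1,3) by (metis finite_Un)
  have fB: "finite B" using assms(1,3) by (metis finite_Un)
  have "v M = (\<Sum>e\<in>A \<union> B. v {e})" using add[of M] assms(3) by simp
  also have "\<dots> = (\<Sum>e\<in>A. v {e}) + (\<Sum>e\<in>B. v {e})"
    by (rule sum.union_disjoint[OF fA fB assms(4)])
  also have "\<dots> = v A + v B" proof -
    have "A \<subseteq> M" "B \<subseteq> M" using assms(3) by auto
    then show ?thesis using add[of A] add[of B] by simp
  qed
  finally show ?thesis .
qed

lemma le0:
  assumes "rmms_prop M v 2 t"
  shows "\<exists>P. is_partition M 2 P \<and> (\<forall>j<2. t \<le> v (P j))"
proof -
  have "\<exists>P. is_partition (M - (\<Union>j<(0::nat). {})) (2 - 0) P \<and> (\<forall>j<2 - 0. t \<le> v (P j))"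
    by (rule assms[unfolded rmms_prop_def, rule_format]) (simp_all add: disjoint_family_on_def)
  then show ?thesis by simp
qed

theorem mainTheorem10:
  fixes M :: "'a set" and v :: "'a set \<Rightarrow> real"
  assumes "finite M" and "additive_valuation M v"
  shows "RMMS M v 2 = MMS M v 2"
proof -
  define S where "S = {t. \<exists>P. is_partition M 2 P \<and> t = Min {v (P j) | j. j < (2::nat)}}"
  have SS: "S \<subseteq> v ` Pow M"
  proof
    fix t assume "t \<in> S"
    then obtain P where P1: "is_partition M 2 P" "t = Min {v (P j) | j. j < (2::nat)}"
      unfolding S_def by blast
    then have P: "is_partition M 2 P" "t = min (v (P 0)) (v (P 1))" unfolding min2 by auto
    have "P 0 \<subseteq> M" "P 1 \<subseteq> M" using part2[OF P(1)] by auto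
    moreover have "t = v (P 0) \<or> t = v (P 1)" using P(2) by (simp add: min_def)
    ultimately show "t \<in> v ` Pow M" by blast
  qed
  have fin: "finite S" by (rule finite_subset[OF SS]) (simp add: assms(1))
  define P0 where "P0 = (\<lambda>j::nat. if j = 0 then M else {})"
  have P0p: "is_partition M 2 P0"
    unfolding is_partition_def two disjoint_family_on_def P0_def by auto
  have "Min {v (P0 j) | j. j < (2::nat)} \<in> S" unfolding S_def mem_Collect_eq
    by (rule exI[where x=P0]) (simp add: P0p)
  then have ne: "S \<noteq> {}" by blast
  define m where "m = Max S"
  have mS: "m \<in> S" using fin ne m_def by simp
  have mge: "\<And>t. t \<in> S \<Longrightarrow> t \<le> m" using fin m_def by simp
  have MMSm: "MMS M v 2 = m"
    unfolding MMS_def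
  proof (rule Greatest_equality)
    show "\<exists>P. is_partition M 2 P \<and> m = Min {v (P j) |j. j < 2}" using mS unfolding S_def by simp
    fix y assume "\<exists>P. is_partition M 2 P \<and> y = Min {v (P j) |j. j < 2}"
    then have "y \<in> S" unfolding S_def by simp
    then show "y \<le> m" by (rule mge)
  qed
  obtain Q where Q1: "is_partition M 2 Q" "m = Min {v (Q j) | j. j < (2::nat)}"
    using mS unfolding S_def by blast
  then have Q: "is_partition M 2 Q" "m = min (v (Q 0)) (v (Q 1))" unfolding min2 by auto
  have vM: "v M = v (Q 0) + v (Q 1)"
    using addsplit[OF assms part2[OF Q(1)]] .
  have m2: "2 * m \<le> v M" using vM Q(2) by linarith
  have rprop: "rmms_prop M v 2 m"
    unfolding rmms_prop_def
  proof (intro allI impI)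
    fix k :: nat and B :: "nat \<Rightarrow> 'a set"
    assume k: "k < 2" and hB: "disjoint_family_on B {..<k} \<and> (\<forall>j<k. B j \<subseteq> M \<and> v (B j) < m)"
    show "\<exists>P. is_partition (M - (\<Union>j<k. B j)) (2 - k) P \<and> (\<forall>j<2 - k. m \<le> v (P j))"
    proof (cases "k = 0")
      case True
      then show ?thesis using Q by (intro exI[of _ Q]) (auto simp: lt2)
    next
      case False
      then have k1: "k = 1" using k by simp
      have B0: "B 0 \<subseteq> M" "v (B 0) < m" using hB k1 by auto
      have "v M = v (B 0) + v (M - B 0)"
        by (rule addsplit[OF assms]) (use B0 in auto)
      then have "m \<le> v (M - B 0)" using B0 m2 by linarith
      moreover have "is_partition (M - B 0) 1 (\<lambda>_. M - B 0)"
        unfolding is_partition_def disjoint_family_on_def by auto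
      moreover have "(\<Union>j<k. B j) = B 0" using k1 by (simp add: lessThan_Suc)
      ultimately show ?thesis using k1 by (intro exI[of _ "\<lambda>_. M - B 0"]) auto
    qed
  qed
  have le: "t \<le> m" if rp: "rmms_prop M v 2 t" for t
  proof -
    obtain P where P0: "is_partition M 2 P" "\<forall>j<2. t \<le> v (P j)" using le0[OF rp] by blast
    then have P: "is_partition M 2 P" "t \<le> v (P 0)" "t \<le> v (P 1)" by auto
    have "min (v (P 0)) (v (P 1)) \<in> S" unfolding S_def mem_Collect_eq min2
      by (intro exI[of _ P]) (simp add: P(1))
    then have "min (v (P 0)) (v (P 1)) \<le> m" by (rule mge)
    moreover have "t \<le> min (v (P 0)) (v (P 1))" using P by simp
    ultimately show ?thesis by linarith
  qed
  have "RMMS M v 2 = m"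
    unfolding RMMS_def by (rule Greatest_equality) (rule rprop, rule le)
  then show ?thesis using MMSm by simp
qed

end
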